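(* Let $\mathcal{A}$ be an algorithm in the Clique model that computes a function $f$ in $T$ rounds. Then there is a layered circuit $\mathcal{C}$ of depth $2T+1$ over an alphabet $\Sigma$ whose symbols are $b\log n$ bits, which has a $1$-parallel partition (that is, an $n^{\varphi}$-parallel partition with $\varphi=0$), such that $f_{\mathcal{C}}=f$.
   Context: Clique model: $n$ nodes communicate in synchronous rounds; in each round every ordered pair of nodes may exchange a message of $b\log n$ bits, for a fixed constant $b$. $\Sigma$ is an alphabet of size $2^{b\log n}$; each node's input is a string in $\Sigma^n$ and at the end each node holds an output in $\Sigma^M$ for some $M$; the function $f$ maps all inputs to all outputs. Layered circuit of depth $D$ over $\Sigma$: a connected directed graph with gate set $V=V_0\cup V_1\cup\dots\cup V_D$ and wires only from $V_i$ to $V_{i+1}$; each gate $v$ of fan-in $F$ is labeled by a function $f_v:\Sigma^F\to\Sigma$; gates of $V_0$ are input gates outputting the input symbols; the value of any other gate is $f_v$ applied to the values of its in-neighbors; $f_{\mathcal{C}}$ maps the inputs to the values of the gates of $V_D$. $n^{\varphi}$-parallel partition: a partition of each layer $V_i$ into $n$ parts $P_{i,w}$, $w\in\{0,\dots,n-1\}$, such that for all $i,w$ the number of wires from $P_{i,w}$ to gates of $V_{i+1}\setminus P_{i+1,w}$ is $O(n^{1+\varphi})$ and the number of wires into $P_{i+1,w}$ from gates of $V_i\setminus P_{i,w}$ is $O(n^{1+\varphi})$. *)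

theory Defs
  imports Complex_Main "HOL-Library.Log_Nat"
begin

text \<open>Symbols of b log n bits: the alphabet is the set of naturals below 2^(b * ceil(log2 n)).\<close>
definition Sigma :: "nat \<Rightarrow> nat \<Rightarrow> nat set" where
  "Sigma b n = {..< 2 ^ (b * ceillog2 n)}"

text \<open>An input assignment: x w j is the j-th symbol of the input string of node w.\<close>
definition valid_input :: "nat set \<Rightarrow> nat \<Rightarrow> (nat \<Rightarrow> nat \<Rightarrow> nat) \<Rightarrow> bool" where
  "valid_input S n x \<longleftrightarrow> (\<forall>w<n. \<forall>j<n. x w j \<in> S)"

definition inp :: "nat \<Rightarrow> (nat \<Rightarrow> nat \<Rightarrow> nat) \<Rightarrow> nat \<Rightarrow> nat list" where
  "inp n x w = map (x w) [0..<n]"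

text \<open>A deterministic algorithm in the Clique model (full-information form).
  msg r u v xu h : the message node u sends to node v in round r, given u's input string xu
  and the history h of messages u has received so far (h ! r' ! w = message from w in round r').
  out u xu h k : the k-th output symbol of node u after all rounds.\<close>
record clique_alg =
  msg :: "nat \<Rightarrow> nat \<Rightarrow> nat \<Rightarrow> nat list \<Rightarrow> nat list list \<Rightarrow> nat"
  out :: "nat \<Rightarrow> nat list \<Rightarrow> nat list list \<Rightarrow> nat \<Rightarrow> nat"

primrec hist :: "clique_alg \<Rightarrow> nat \<Rightarrow> (nat \<Rightarrow> nat \<Rightarrow> nat) \<Rightarrow> nat \<Rightarrow> nat \<Rightarrow> nat list list" where
  "hist A n x 0 = (\<lambda>u. [])"
| "hist A n x (Suc r) = (\<lambda>u. hist A n x r u @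
      [map (\<lambda>w. msg A r w u (inp n x w) (hist A n x r w)) [0..<n]])"

definition computes_in :: "nat set \<Rightarrow> nat \<Rightarrow> nat \<Rightarrow> clique_alg \<Rightarrow> nat
    \<Rightarrow> ((nat \<Rightarrow> nat \<Rightarrow> nat) \<Rightarrow> nat \<Rightarrow> nat \<Rightarrow> nat) \<Rightarrow> bool" where
  "computes_in S n M A T f \<longleftrightarrow>
     (\<forall>x. valid_input S n x \<longrightarrow>
        (\<forall>r<T. \<forall>u<n. \<forall>v<n. msg A r u v (inp n x u) (hist A n x r u) \<in> S) \<and>
        (\<forall>w<n. \<forall>k<M. out A w (inp n x w) (hist A n x T w) k \<in> S \<and>
                      out A w (inp n x w) (hist A n x T w) k = f x w k))"

text \<open>Gates are natural numbers. layer i = V_i; ins g = list of in-neighbours of g (ordered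
  arguments of the gate function); gfun g = f_g; inlab g = (w,j) means the input gate g outputs
  the j-th input symbol of node w; outlab g = (w,k) means the output gate g gives the k-th output
  symbol of node w.\<close>
record circuit =
  layer :: "nat \<Rightarrow> nat set"
  ins :: "nat \<Rightarrow> nat list"
  gfun :: "nat \<Rightarrow> nat list \<Rightarrow> nat"
  inlab :: "nat \<Rightarrow> nat \<times> nat"
  outlab :: "nat \<Rightarrow> nat \<times> nat"

definition gates :: "circuit \<Rightarrow> nat \<Rightarrow> nat set" where
  "gates C D = (\<Union>i\<le>D. layer C i)"

definition wires :: "circuit \<Rightarrow> nat \<Rightarrow> (nat \<times> nat) set" where
  "wires C D = {(u, g). g \<in> gates C D \<and> u \<in> set (ins C g)}"

definition connected_circuit :: "circuit \<Rightarrow> nat \<Rightarrow> bool" where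
  "connected_circuit C D \<longleftrightarrow> gates C D \<noteq> {} \<and>
     (\<forall>u\<in>gates C D. \<forall>v\<in>gates C D. (u, v) \<in> (wires C D \<union> (wires C D)\<inverse>)\<^sup>*)"

definition layered_circuit :: "nat set \<Rightarrow> nat \<Rightarrow> nat \<Rightarrow> nat \<Rightarrow> circuit \<Rightarrow> bool" where
  "layered_circuit S n M D C \<longleftrightarrow>
     (\<forall>i\<le>D. finite (layer C i)) \<and>
     (\<forall>i\<le>D. \<forall>j\<le>D. i \<noteq> j \<longrightarrow> layer C i \<inter> layer C j = {}) \<and>
     (\<forall>g\<in>gates C D. distinct (ins C g)) \<and>
     (\<forall>g\<in>layer C 0. ins C g = []) \<and>
     bij_betw (inlab C) (layer C 0) ({..<n} \<times> {..<n}) \<and>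
     (\<forall>i<D. \<forall>g\<in>layer C (Suc i). set (ins C g) \<subseteq> layer C i) \<and>
     (\<forall>i<D. \<forall>g\<in>layer C (Suc i). \<forall>xs. length xs = length (ins C g) \<and> set xs \<subseteq> S
          \<longrightarrow> gfun C g xs \<in> S) \<and>
     bij_betw (outlab C) (layer C D) ({..<n} \<times> {..<M}) \<and>
     connected_circuit C D"

primrec gval :: "circuit \<Rightarrow> (nat \<Rightarrow> nat \<Rightarrow> nat) \<Rightarrow> nat \<Rightarrow> nat \<Rightarrow> nat" where
  "gval C x 0 g = x (fst (inlab C g)) (snd (inlab C g))"
| "gval C x (Suc i) g = gfun C g (map (gval C x i) (ins C g))"

definition circuit_computes :: "nat set \<Rightarrow> nat \<Rightarrow> nat \<Rightarrow> circuit
    \<Rightarrow> ((nat \<Rightarrow> nat \<Rightarrow> nat) \<Rightarrow> nat \<Rightarrow> nat \<Rightarrow> nat) \<Rightarrow> bool" where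
  "circuit_computes S n D C f \<longleftrightarrow>
     (\<forall>x. valid_input S n x \<longrightarrow>
        (\<forall>g\<in>layer C D. gval C x D g = f x (fst (outlab C g)) (snd (outlab C g))))"

text \<open>part i g = w means gate g of layer i lies in part P_{i,w}. Wires are counted along the
  in-neighbour lists. The bound O(n^(1+phi)) is witnessed by the constant c.\<close>
definition wires_out :: "circuit \<Rightarrow> (nat \<Rightarrow> nat \<Rightarrow> nat) \<Rightarrow> nat \<Rightarrow> nat \<Rightarrow> nat" where
  "wires_out C part i w =
     (\<Sum>g\<in>{g\<in>layer C (Suc i). part (Suc i) g \<noteq> w}. length (filter (\<lambda>u. part i u = w) (ins C g)))"

definition wires_in :: "circuit \<Rightarrow> (nat \<Rightarrow> nat \<Rightarrow> nat) \<Rightarrow> nat \<Rightarrow> nat \<Rightarrow> nat" where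
  "wires_in C part i w =
     (\<Sum>g\<in>{g\<in>layer C (Suc i). part (Suc i) g = w}. length (filter (\<lambda>u. part i u \<noteq> w) (ins C g)))"

definition parallel_partition :: "real \<Rightarrow> real \<Rightarrow> nat \<Rightarrow> nat \<Rightarrow> circuit \<Rightarrow> (nat \<Rightarrow> nat \<Rightarrow> nat) \<Rightarrow> bool" where
  "parallel_partition c \<phi> n D C part \<longleftrightarrow>
     (\<forall>i\<le>D. \<forall>g\<in>layer C i. part i g < n) \<and>
     (\<forall>i<D. \<forall>w<n. real (wires_out C part i w) \<le> c * real n powr (1 + \<phi>) \<and>
                  real (wires_in C part i w) \<le> c * real n powr (1 + \<phi>))"

end

theory Submission
  imports Defs "HOL-Library.Nat_Bijection"
begin

definition G :: "nat \<Rightarrow> nat \<Rightarrow> nat \<Rightarrow> nat" where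
  "G i u j = prod_encode (i, prod_encode (u, j))"

definition dec :: "nat \<Rightarrow> nat \<times> nat \<times> nat" where
  "dec g = (fst (prod_decode g), prod_decode (snd (prod_decode g)))"

lemma dec_G[simp]: "dec (G i u j) = (i, u, j)"
  by (simp add: G_def dec_def)

lemma G_eq[simp]: "G i u j = G i' u' j' \<longleftrightarrow> i = i' \<and> u = u' \<and> j = j'"
  by (simp add: G_def)

definition dech :: "nat \<Rightarrow> nat \<Rightarrow> nat list \<Rightarrow> nat list list" where
  "dech n r xs = map (\<lambda>r'. take n (drop (n * Suc r') xs)) [0..<r]"

locale sim =
  fixes n M T :: nat and A :: clique_alg and S :: "nat set"
  assumes npos: "0 < n" and Mpos: "0 < M" and zS: "0 \<in> S"
begin

definition st :: "nat \<Rightarrow> nat" where "st r = n * Suc r"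
definition K :: nat where "K = n * Suc T + n"

definition cl :: "nat \<Rightarrow> nat" where "cl y = (if y \<in> S then y else 0)"

fun ins3 :: "nat \<times> nat \<times> nat \<Rightarrow> nat list" where
  "ins3 (i, u, j) =
    (if i = 0 then []
     else if i = 2*T+1 then map (G (2*T) u) [0..<st T] @ (if j = 0 \<and> u \<noteq> 0 then [G (2*T) 0 0] else [])
     else if odd i then
       (if st (i div 2) \<le> j \<and> j < st (i div 2) + n then map (G (i-1) u) [0..<st (i div 2)]
        else [G (i-1) u (if j < st (i div 2) then j else 0)])
     else
       (if st ((i-2) div 2) \<le> j \<and> j < st ((i-2) div 2) + n
        then [G (i-1) (j - st ((i-2) div 2)) (st ((i-2) div 2) + u)]
        else [G (i-1) u (if j < st ((i-2) div 2) then j else 0)]))"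

fun gfun3 :: "nat \<times> nat \<times> nat \<Rightarrow> nat list \<Rightarrow> nat" where
  "gfun3 (i, u, j) xs =
    (if i = 2*T+1 then cl (out A u (take n xs) (dech n T xs) j)
     else if odd i \<and> st (i div 2) \<le> j \<and> j < st (i div 2) + n
     then cl (msg A (i div 2) u (j - st (i div 2)) (take n xs) (dech n (i div 2) xs))
     else hd xs)"

definition layer3 :: "nat \<Rightarrow> (nat \<times> nat) set" where
  "layer3 i = (if i = 0 then {..<n} \<times> {..<n} else if i = 2*T+1 then {..<n} \<times> {..<M}
     else if i \<le> 2*T then {..<n} \<times> {..<K} else {})"

definition CC :: circuit where
  "CC = \<lparr> layer = (\<lambda>i. (\<lambda>(u,j). G i u j) ` layer3 i),
          ins = (\<lambda>g. ins3 (dec g)),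
          gfun = (\<lambda>g. gfun3 (dec g)),
          inlab = (\<lambda>g. snd (dec g)),
          outlab = (\<lambda>g. snd (dec g)) \<rparr>"

definition part :: "nat \<Rightarrow> nat \<Rightarrow> nat" where
  "part i g = fst (snd (dec g))"

lemma layer_CC: "layer CC i = (\<lambda>(u,j). G i u j) ` layer3 i"
  by (simp add: CC_def)
lemma ins_CC[simp]: "ins CC (G i u j) = ins3 (i, u, j)"
  by (simp add: CC_def)
lemma gfun_CC[simp]: "gfun CC (G i u j) = gfun3 (i, u, j)"
  by (simp add: CC_def)
lemma inlab_CC[simp]: "inlab CC (G i u j) = (u, j)"
  by (simp add: CC_def)
lemma outlab_CC[simp]: "outlab CC (G i u j) = (u, j)"
  by (simp add: CC_def)
lemma part_G[simp]: "part i (G i' u j) = u"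
  by (simp add: part_def)

lemma mem_layer: "g \<in> layer CC i \<longleftrightarrow> (\<exists>u j. g = G i u j \<and> (u, j) \<in> layer3 i)"
  by (auto simp: layer_CC)

lemma st_pos: "0 < st r" using npos by (simp add: st_def)
lemma st_Suc: "st (Suc r) = st r + n" by (simp add: st_def)
lemma st_le_K: "r \<le> T \<Longrightarrow> st r + n \<le> K"
  by (simp add: st_def K_def)


lemma hist_len: "length (hist A n x r u) = r \<and> (\<forall>e\<in>set (hist A n x r u). length e = n)"
  by (induction r arbitrary: u) auto

definition state :: "(nat \<Rightarrow> nat \<Rightarrow> nat) \<Rightarrow> nat \<Rightarrow> nat \<Rightarrow> nat list" where
  "state x r u = inp n x u @ concat (hist A n x r u)"

lemma len_inp[simp]: "length (inp n x u) = n" by (simp add: inp_def)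

lemma len_state[simp]: "length (state x r u) = st r"
proof -
  have "length (concat (hist A n x r u)) = r * n"
    by (induction r arbitrary: u) auto
  then show ?thesis by (simp add: state_def st_def)
qed


definition mrow :: "(nat \<Rightarrow> nat \<Rightarrow> nat) \<Rightarrow> nat \<Rightarrow> nat \<Rightarrow> nat list" where
  "mrow x r u = map (\<lambda>w. msg A r w u (inp n x w) (hist A n x r w)) [0..<n]"

lemma state_Suc: "state x (Suc r) u = state x r u @ mrow x r u"
  by (simp add: state_def mrow_def)

lemma take_state: "take n (state x r u @ ys) = inp n x u"
  by (simp add: state_def)

lemma dech_Suc: "dech n (Suc r) xs = dech n r xs @ [take n (drop (n * Suc r) xs)]"
  by (simp add: dech_def)

lemma dech_state: "dech n r (state x r u @ ys) = hist A n x r u"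
proof (induction r arbitrary: ys)
  case 0
  then show ?case by (simp add: dech_def)
next
  case (Suc r)
  have l: "length (state x r u) = n * Suc r" by (simp add: st_def)
  have "dech n (Suc r) (state x (Suc r) u @ ys) =
        dech n r (state x r u @ (mrow x r u @ ys)) @ [take n (drop (n * Suc r) (state x r u @ mrow x r u @ ys))]"
    by (simp add: dech_Suc state_Suc)
  also have "\<dots> = hist A n x r u @ [mrow x r u]"
    using Suc.IH l by (simp add: mrow_def)
  finally show ?case by (simp add: mrow_def)
qed


definition Ev :: "(nat \<Rightarrow> nat \<Rightarrow> nat) \<Rightarrow> nat \<Rightarrow> bool" where
  "Ev x r \<longleftrightarrow> (\<forall>u<n. \<forall>j<st r. gval CC x (2*r) (G (2*r) u j) = state x r u ! j)"

definition Od :: "(nat \<Rightarrow> nat \<Rightarrow> nat) \<Rightarrow> nat \<Rightarrow> bool" where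
  "Od x r \<longleftrightarrow> (\<forall>u<n. (\<forall>j<st r. gval CC x (Suc (2*r)) (G (Suc (2*r)) u j) = state x r u ! j) \<and>
       (\<forall>v<n. gval CC x (Suc (2*r)) (G (Suc (2*r)) u (st r + v)) = msg A r u v (inp n x u) (hist A n x r u)))"

lemma Ev0: "Ev x 0"
  by (simp add: Ev_def state_def inp_def st_def)

lemma map_state: "Ev x r \<Longrightarrow> u < n \<Longrightarrow> map (gval CC x (2*r)) (map (G (2*r) u) [0..<st r]) = state x r u"
  by (rule nth_equalityI) (auto simp: Ev_def)

lemma odd_step:
  assumes E: "Ev x r" and rT: "r < T"
    and mS: "\<forall>u<n. \<forall>v<n. msg A r u v (inp n x u) (hist A n x r u) \<in> S"
  shows "Od x r"
proof -
  { fix u assume u: "u < n"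
  have d: "Suc (2*r) div 2 = r" by simp
  have ne: "Suc (2*r) \<noteq> 2*T+1" using rT by simp
  have A: "\<forall>j<st r. gval CC x (Suc (2*r)) (G (Suc (2*r)) u j) = state x r u ! j"
  proof (intro allI impI)
    fix j assume j: "j < st r"
    have "gval CC x (Suc (2*r)) (G (Suc (2*r)) u j) = gfun3 (Suc (2*r), u, j) [gval CC x (2*r) (G (2*r) u j)]"
      using ne j by (simp del: gfun3.simps)
    also have "\<dots> = gval CC x (2*r) (G (2*r) u j)" using ne j by simp
    also have "\<dots> = state x r u ! j" using E u j by (simp add: Ev_def)
    finally show "gval CC x (Suc (2*r)) (G (Suc (2*r)) u j) = state x r u ! j" .
  qed
  have B: "\<forall>v<n. gval CC x (Suc (2*r)) (G (Suc (2*r)) u (st r + v)) = msg A r u v (inp n x u) (hist A n x r u)"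
  proof (intro allI impI)
    fix v assume v: "v < n"
    have "gval CC x (Suc (2*r)) (G (Suc (2*r)) u (st r + v)) =
          gfun3 (Suc (2*r), u, st r + v) (map (gval CC x (2*r)) (map (G (2*r) u) [0..<st r]))"
      using ne v by (simp del: gfun3.simps)
    also have "\<dots> = gfun3 (Suc (2*r), u, st r + v) (state x r u @ [])"
      using map_state[OF E u] by simp
    also have "\<dots> = cl (msg A r u v (inp n x u) (hist A n x r u))"
      using ne v by (simp only: gfun3.simps take_state dech_state d) simp
    also have "\<dots> = msg A r u v (inp n x u) (hist A n x r u)"
      using mS u v by (simp add: cl_def)
    finally show "gval CC x (Suc (2*r)) (G (Suc (2*r)) u (st r + v)) = msg A r u v (inp n x u) (hist A n x r u)" .
  qed
  note conjI[OF A B] }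
  then show ?thesis unfolding Od_def by blast
qed


lemma even_step:
  assumes O: "Od x r" and rT: "r < T"
  shows "Ev x (Suc r)"
proof -
  have i: "2 * Suc r = Suc (Suc (2*r))" by simp
  have d: "(Suc (Suc (2*r)) - 2) div 2 = r" by simp
  have ne: "Suc (Suc (2*r)) \<noteq> 2*T+1" by presburger
  have ev: "\<not> odd (Suc (Suc (2*r)))" by simp
  { fix u j assume u: "u < n" and j: "j < st (Suc r)"
    have "gval CC x (2 * Suc r) (G (2 * Suc r) u j) = state x (Suc r) u ! j"
    proof (cases "j < st r")
      case True
      have "gval CC x (2 * Suc r) (G (2 * Suc r) u j) = gfun3 (Suc (Suc (2*r)), u, j) [gval CC x (Suc (2*r)) (G (Suc (2*r)) u j)]"
        unfolding i using True ne by (simp del: gfun3.simps)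
      also have "\<dots> = gval CC x (Suc (2*r)) (G (Suc (2*r)) u j)" using ne ev by simp
      also have "\<dots> = state x r u ! j" using O u True by (simp add: Od_def)
      also have "\<dots> = state x (Suc r) u ! j" using True by (simp add: state_Suc nth_append)
      finally show ?thesis .
    next
      case False
      define w where "w = j - st r"
      have w: "w < n" "j = st r + w" using False j by (auto simp: w_def st_Suc)
      have "gval CC x (2 * Suc r) (G (2 * Suc r) u j) = gfun3 (Suc (Suc (2*r)), u, j) [gval CC x (Suc (2*r)) (G (Suc (2*r)) w (st r + u))]"
        unfolding i using w ne by (simp del: gfun3.simps)
      also have "\<dots> = gval CC x (Suc (2*r)) (G (Suc (2*r)) w (st r + u))" using ne ev by simp
      also have "\<dots> = msg A r w u (inp n x w) (hist A n x r w)" using O u w by (simp add: Od_def)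
      also have "\<dots> = state x (Suc r) u ! j" using w by (simp add: state_Suc nth_append mrow_def)
      finally show ?thesis .
    qed }
  then show ?thesis by (simp add: Ev_def)
qed

lemma Ev_all:
  assumes mS: "\<forall>r<T. \<forall>u<n. \<forall>v<n. msg A r u v (inp n x u) (hist A n x r u) \<in> S"
  shows "r \<le> T \<Longrightarrow> Ev x r"
proof (induction r)
  case 0 show ?case by (rule Ev0)
next
  case (Suc r)
  then have "r < T" by simp
  then show ?case using Suc odd_step even_step mS by simp
qed


lemma layer_D: "layer CC (2*T+1) = (\<lambda>(u,j). G (2*T+1) u j) ` ({..<n} \<times> {..<M})"
  by (simp add: layer_CC layer3_def)

lemma computes:
  assumes c: "computes_in S n M A T f"
  shows "circuit_computes S n (2*T+1) CC f"
  unfolding circuit_computes_def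
proof (intro allI impI ballI)
  fix x g assume v: "valid_input S n x" and g: "g \<in> layer CC (2*T+1)"
  from g obtain u k where u: "u < n" and k: "k < M" and gd: "g = G (2*T+1) u k"
    using g unfolding layer_D by auto
  from c v have mS: "\<forall>r<T. \<forall>u<n. \<forall>v<n. msg A r u v (inp n x u) (hist A n x r u) \<in> S"
    and oS: "\<forall>w<n. \<forall>k<M. out A w (inp n x w) (hist A n x T w) k \<in> S \<and>
                      out A w (inp n x w) (hist A n x T w) k = f x w k"
    unfolding computes_in_def by blast+
  have E: "Ev x T" using Ev_all[OF mS] by simp
  define ys where "ys = map (gval CC x (2*T)) (if k = 0 \<and> u \<noteq> 0 then [G (2*T) 0 0] else [])"
  have "gval CC x (2*T+1) g = gfun3 (2*T+1, u, k) (map (gval CC x (2*T)) (map (G (2*T) u) [0..<st T]) @ ys)"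
    unfolding gd ys_def by (simp del: gfun3.simps)
  also have "\<dots> = gfun3 (2*T+1, u, k) (state x T u @ ys)" using map_state[OF E u] by simp
  also have "\<dots> = cl (out A u (inp n x u) (hist A n x T u) k)"
    by (simp only: gfun3.simps take_state dech_state) simp
  also have "\<dots> = f x u k" using oS u k unfolding cl_def by metis
  finally show "gval CC x (2*T+1) g = f x (fst (outlab CC g)) (snd (outlab CC g))"
    by (simp add: gd)
qed


lemma st_mono: "r \<le> r' \<Longrightarrow> st r \<le> st r'"
  by (simp add: st_def)

lemma L3: "i \<le> 2*T \<Longrightarrow> u < n \<Longrightarrow> j < st (i div 2) \<Longrightarrow> (u,j) \<in> layer3 i"
proof -
  assume a: "i \<le> 2*T" "u < n" "j < st (i div 2)"
  have "st (i div 2) \<le> st T" using a(1) by (intro st_mono) simp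
  then have "j < K" using a(3) st_le_K[of T] by simp
  then show ?thesis using a by (auto simp: layer3_def st_def)
qed

lemma L3': "0 < i \<Longrightarrow> i \<le> 2*T \<Longrightarrow> u < n \<Longrightarrow> j < st (i div 2) + n \<Longrightarrow> (u,j) \<in> layer3 i"
proof -
  assume a: "0 < i" "i \<le> 2*T" "u < n" "j < st (i div 2) + n"
  have "st (i div 2) + n \<le> K" using a(2) by (intro st_le_K) simp
  then show ?thesis using a by (auto simp: layer3_def)
qed

lemma GL: "(u,j) \<in> layer3 i \<Longrightarrow> G i u j \<in> layer CC i"
  by (auto simp: layer_CC)

lemma ins_sub: assumes "0 < i" "i \<le> 2*T+1" "(u,j) \<in> layer3 i"
  shows "set (ins3 (i,u,j)) \<subseteq> layer CC (i-1)"
proof -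
  have u: "u < n" using assms(3) by (auto simp: layer3_def split: if_splits)
  show ?thesis
  proof (cases "i = 2*T+1")
    case True
    then show ?thesis using u assms by (auto intro!: GL L3 simp: st_pos npos)
  next
    case ne: False
    then have i2: "i \<le> 2*T" using assms by simp
    show ?thesis
    proof (cases "odd i")
      case True
      have d: "(i - 1) div 2 = i div 2" using True by (auto elim: oddE)
      have "i - 1 \<le> 2*T" using i2 by simp
      then show ?thesis using True ne assms u d by (auto intro!: GL L3 simp: st_pos)
    next
      case False
      have d: "(i - 1) div 2 = (i-2) div 2" using False assms(1) by (auto elim!: evenE) presburger
      have "i - 1 \<le> 2*T" "0 < i - 1" using i2 False assms(1) by (auto elim!: evenE)
      define r where "r = (i-2) div 2"
      have dd: "(i - 1) div 2 = r" using d r_def by simp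
      have e: "ins3 (i,u,j) = (if st r \<le> j \<and> j < st r + n
        then [G (i-1) (j - st r) (st r + u)]
        else [G (i-1) u (if j < st r then j else 0)])" using False ne assms(1) by (simp add: r_def)
      show ?thesis
      proof (cases "st r \<le> j \<and> j < st r + n")
        case True
        have "j - st r < n" using True by linarith
        then have "(j - st r, st r + u) \<in> layer3 (i-1)"
          using L3'[OF \<open>0 < i - 1\<close> \<open>i - 1 \<le> 2*T\<close>, of "j - st r" "st r + u"] True u dd by simp
        then show ?thesis using e True by (auto intro: GL)
      next
        case False
        have "(u, if j < st r then j else 0) \<in> layer3 (i-1)"
          using L3[OF \<open>i - 1 \<le> 2*T\<close> u] dd st_pos by simp
        then show ?thesis using e False by (auto intro: GL)
      qed
    qed
  qed
qed


lemma ins_ne: "0 < i \<Longrightarrow> ins3 (i,u,j) \<noteq> []"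
  using st_pos[of T] st_pos[of "i div 2"] by auto

lemma cl_S: "cl y \<in> S" using zS by (simp add: cl_def)

lemma gfun_S: "0 < i \<Longrightarrow> length xs = length (ins3 (i,u,j)) \<Longrightarrow> set xs \<subseteq> S \<Longrightarrow> gfun3 (i,u,j) xs \<in> S"
proof -
  assume a: "0 < i" "length xs = length (ins3 (i,u,j))" "set xs \<subseteq> S"
  then have "xs \<noteq> []" using ins_ne[of i u j] by auto
  then have "hd xs \<in> S" using a(3) by (auto intro: hd_in_set)
  then show ?thesis using cl_S by (simp del: ins3.simps)
qed

lemma ins_distinct: "distinct (ins3 (i,u,j))"
  by (auto simp: distinct_map inj_on_def)


abbreviation "D \<equiv> 2*T+1"
abbreviation "RR \<equiv> (wires CC D \<union> (wires CC D)\<inverse>)\<^sup>*"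

lemma R_sym: "(x,y) \<in> (r \<union> r\<inverse>)\<^sup>* \<Longrightarrow> (y,x) \<in> (r \<union> r\<inverse>)\<^sup>*"
proof -
  assume "(x,y) \<in> (r \<union> r\<inverse>)\<^sup>*"
  then have "(y,x) \<in> ((r \<union> r\<inverse>)\<inverse>)\<^sup>*" by (simp add: rtrancl_converse)
  moreover have "(r \<union> r\<inverse>)\<inverse> = r \<union> r\<inverse>" by auto
  ultimately show ?thesis by simp
qed

lemma gates_G: "i \<le> D \<Longrightarrow> (u,j) \<in> layer3 i \<Longrightarrow> G i u j \<in> gates CC D"
  unfolding gates_def by (auto intro: GL)

lemma gates_G2: "i \<le> Suc (2*T) \<Longrightarrow> (u,j) \<in> layer3 i \<Longrightarrow> G i u j \<in> gates CC (Suc (2*T))"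
  using gates_G by simp

lemma wireR: "g \<in> gates CC D \<Longrightarrow> h \<in> set (ins CC g) \<Longrightarrow> (h, g) \<in> RR \<and> (g, h) \<in> RR"
  by (auto simp: wires_def)

lemma R_trans: "(x,y) \<in> RR \<Longrightarrow> (y,z) \<in> RR \<Longrightarrow> (x,z) \<in> RR" by simp

lemma conA: "u < n \<Longrightarrow> j < n \<Longrightarrow> (G 0 u j, G 0 u 0) \<in> RR"
proof -
  assume u: "u < n" and j: "j < n"
  define g1 where "g1 = (if T = 0 then G 1 u 0 else G 1 u (st 0))"
  have g1: "g1 \<in> gates CC D"
  proof (cases "T = 0")
    case True
    have "(u,0) \<in> layer3 1" unfolding layer3_def using True u Mpos by simp
    then show ?thesis using gates_G[of 1 u 0] by (simp add: g1_def True)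
  next
    case False
    have "(u, st 0) \<in> layer3 1" using False u by (intro L3') auto
    then show ?thesis using False gates_G[of 1 u "st 0"] by (simp add: g1_def)
  qed
  have s: "set (map (G 0 u) [0..<st 0]) \<subseteq> set (ins CC g1)"
  proof (cases "T = 0")
    case True
    have "ins CC (G 1 u 0) = ins3 (1, u, 0)" by simp
    also have "\<dots> = map (G 0 u) [0..<st 0] @ (if u \<noteq> 0 then [G 0 0 0] else [])"
      unfolding ins3.simps using True by simp
    finally show ?thesis using True by (simp add: g1_def)
  next
    case False
    have "ins CC (G 1 u (st 0)) = ins3 (1, u, st 0)" by simp
    also have "\<dots> = map (G 0 u) [0..<st 0]"
      unfolding ins3.simps using False npos by simp
    finally show ?thesis using False by (simp add: g1_def)
  qed
  have "G 0 u j \<in> set (ins CC g1)" "G 0 u 0 \<in> set (ins CC g1)"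
    using s j npos by (auto simp: st_def)
  then show ?thesis using wireR[OF g1] by (meson R_trans)
qed

lemma conB: "u < n \<Longrightarrow> i \<le> 2*T \<Longrightarrow> (G 0 u 0, G i u 0) \<in> RR"
proof (induction i)
  case 0 then show ?case by simp
next
  case (Suc i)
  have g: "G (Suc i) u 0 \<in> gates CC D"
    using Suc.prems by (intro gates_G L3) (auto simp: st_pos)
  have "ins CC (G (Suc i) u 0) = [G i u 0]"
    using Suc.prems st_pos[of "Suc i div 2"] st_pos[of "(Suc i - 2) div 2"] by auto
  then have "(G i u 0, G (Suc i) u 0) \<in> RR" using wireR[OF g] by simp
  then show ?case using Suc by (meson R_trans Suc_leD)
qed

lemma conC: "u < n \<Longrightarrow> (G (2*T) u 0, G (2*T) 0 0) \<in> RR"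
proof (cases "u = 0")
  case True then show ?thesis by simp
next
  case False
  assume u: "u < n"
  have g: "G D u 0 \<in> gates CC D" using u Mpos by (intro gates_G) (auto simp: layer3_def)
  have "G (2*T) u 0 \<in> set (ins CC (G D u 0))" "G (2*T) 0 0 \<in> set (ins CC (G D u 0))"
    using False st_pos[of T] by auto
  then show ?thesis using wireR[OF g] by (meson R_trans)
qed

lemma con0: "u < n \<Longrightarrow> j < n \<Longrightarrow> (G 0 u j, G 0 0 0) \<in> RR"
proof -
  assume u: "u < n" and j: "j < n"
  have "(G 0 0 0, G (2*T) 0 0) \<in> RR" using conB[of 0 "2*T"] npos by simp
  then have b0: "(G (2*T) 0 0, G 0 0 0) \<in> RR" by (rule R_sym)
  show ?thesis using conA[OF u j] conB[OF u, of "2*T"] conC[OF u] b0 by (meson R_trans order_refl)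
qed

lemma con_all: "i \<le> D \<Longrightarrow> g \<in> layer CC i \<Longrightarrow> (g, G 0 0 0) \<in> RR"
proof (induction i arbitrary: g)
  case 0
  then show ?case using con0 by (auto simp: layer_CC layer3_def)
next
  case (Suc i)
  from Suc.prems obtain u j where g: "g = G (Suc i) u j" and uj: "(u,j) \<in> layer3 (Suc i)"
    by (auto simp: layer_CC)
  have gg: "g \<in> gates CC D" using Suc.prems g uj gates_G[of "Suc i" u j] by simp
  define h where "h = hd (ins3 (Suc i, u, j))"
  have hin: "h \<in> set (ins CC g)" using ins_ne[of "Suc i" u j] by (simp add: h_def g del: ins3.simps)
  have "h \<in> layer CC i" using ins_sub[of "Suc i" u j] uj Suc.prems hin g by auto
  then have "(h, G 0 0 0) \<in> RR" using Suc by simp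
  then show ?case using wireR[OF gg hin] by (meson R_trans)
qed

lemma connected: "connected_circuit CC D"
  unfolding connected_circuit_def
proof (intro conjI ballI)
  have "G 0 0 0 \<in> gates CC D" using npos by (intro gates_G) (auto simp: layer3_def)
  then show "gates CC D \<noteq> {}" by auto
  fix a b assume a: "a \<in> gates CC D" and b: "b \<in> gates CC D"
  from a obtain i where "i \<le> D" "a \<in> layer CC i" by (auto simp: gates_def)
  then have 1: "(a, G 0 0 0) \<in> RR" by (rule con_all)
  from b obtain i' where "i' \<le> D" "b \<in> layer CC i'" by (auto simp: gates_def)
  then have "(b, G 0 0 0) \<in> RR" by (rule con_all)
  then have "(G 0 0 0, b) \<in> RR" by (rule R_sym)
  with 1 show "(a, b) \<in> RR" by (rule R_trans)
qed


lemma sum_le_n: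
  fixes f :: "nat \<Rightarrow> nat"
  assumes fin: "finite X" and le1: "\<And>g. g \<in> X \<Longrightarrow> f g \<le> 1"
    and nz: "\<And>g. g \<in> X \<Longrightarrow> f g \<noteq> 0 \<Longrightarrow> g \<in> h ` {..<n}"
  shows "sum f X \<le> n"
proof -
  let ?Y = "{g\<in>X. f g \<noteq> 0}"
  have "sum f X = sum f ?Y" using fin by (intro sum.mono_neutral_right) auto
  also have "\<dots> \<le> sum (\<lambda>_. 1) ?Y" using le1 by (intro sum_mono) auto
  also have "\<dots> = card ?Y" by simp
  also have "\<dots> \<le> card (h ` {..<n})" using nz by (intro card_mono) auto
  also have "\<dots> \<le> n" using card_image_le[of "{..<n}" h] by simp
  finally show ?thesis .
qed

lemma fin_layer: "finite (layer CC i)"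
  by (simp add: layer_CC layer3_def)

lemma gate_cases:
  assumes i: "i < D" and uj: "(u,j) \<in> layer3 (Suc i)"
  shows "(Suc i = D \<and> ins3 (Suc i,u,j) = map (G i u) [0..<st T] @ (if j = 0 \<and> u \<noteq> 0 then [G i 0 0] else []))
     \<or> (Suc i \<noteq> D \<and> (\<exists>j'. ins3 (Suc i,u,j) = [G i u j']))
     \<or> (Suc i \<noteq> D \<and> odd (Suc i) \<and> (\<exists>xs. ins3 (Suc i,u,j) = map (G i u) xs))
     \<or> (Suc i \<noteq> D \<and> even (Suc i) \<and> st ((Suc i - 2) div 2) \<le> j \<and> j < st ((Suc i - 2) div 2) + n \<and>
          ins3 (Suc i,u,j) = [G i (j - st ((Suc i - 2) div 2)) (st ((Suc i - 2) div 2) + u)])"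
proof (cases "Suc i = D")
  case True
  then have "i = 2*T" by simp
  then show ?thesis using True by simp
next
  case False
  then show ?thesis by (cases "odd (Suc i)") auto
qed

lemma wires_out_le: assumes i: "i < D" shows "wires_out CC part i w \<le> n"
  unfolding wires_out_def
proof (rule sum_le_n[where h = "\<lambda>u. if Suc i = D then G D u 0 else G (Suc i) u (st ((Suc i - 2) div 2) + w)"])
  show "finite {g \<in> layer CC (Suc i). part (Suc i) g \<noteq> w}" using fin_layer by simp
next
  fix g assume g: "g \<in> {g \<in> layer CC (Suc i). part (Suc i) g \<noteq> w}"
  then obtain u j where gd: "g = G (Suc i) u j" and uj: "(u,j) \<in> layer3 (Suc i)" and uw: "u \<noteq> w"
    by (auto simp: layer_CC)
  have u: "u < n" using uj by (auto simp: layer3_def split: if_splits)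
  let ?f = "\<lambda>g. length (filter (\<lambda>v. part i v = w) (ins CC g))"
  have "?f g \<le> 1 \<and> (?f g \<noteq> 0 \<longrightarrow> g \<in> (\<lambda>u. if Suc i = D then G D u 0 else G (Suc i) u (st ((Suc i - 2) div 2) + w)) ` {..<n})"
    using gate_cases[OF i uj]
  proof (elim disjE conjE exE)
    assume "Suc i = D" and e: "ins3 (Suc i, u, j) = map (G i u) [0..<st T] @ (if j = 0 \<and> u \<noteq> 0 then [G i 0 0] else [])"
    then show ?thesis using uw u by (auto simp: gd filter_map o_def)
  next
    fix j' assume "Suc i \<noteq> D" "ins3 (Suc i, u, j) = [G i u j']"
    then show ?thesis using uw by (simp add: gd)
  next
    fix xs assume "Suc i \<noteq> D" "ins3 (Suc i, u, j) = map (G i u) xs"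
    then show ?thesis using uw by (simp add: gd filter_map o_def)
  next
    assume a: "Suc i \<noteq> D" "st ((Suc i - 2) div 2) \<le> j" "j < st ((Suc i - 2) div 2) + n"
      "ins3 (Suc i, u, j) = [G i (j - st ((Suc i - 2) div 2)) (st ((Suc i - 2) div 2) + u)]"
    have "j - st ((Suc i - 2) div 2) = w \<Longrightarrow> j = st ((Suc i - 2) div 2) + w" using a(2) by simp
    then show ?thesis using a u by (auto simp: gd)
  qed
  then show "?f g \<le> 1" "?f g \<noteq> 0 \<Longrightarrow> g \<in> (\<lambda>u. if Suc i = D then G D u 0 else G (Suc i) u (st ((Suc i - 2) div 2) + w)) ` {..<n}"
    by auto
qed

lemma wires_in_le: assumes i: "i < D" shows "wires_in CC part i w \<le> n"
  unfolding wires_in_def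
proof (rule sum_le_n[where h = "\<lambda>v. if Suc i = D then G D w 0 else G (Suc i) w (st ((Suc i - 2) div 2) + v)"])
  show "finite {g \<in> layer CC (Suc i). part (Suc i) g = w}" using fin_layer by simp
next
  fix g assume g: "g \<in> {g \<in> layer CC (Suc i). part (Suc i) g = w}"
  then obtain u j where gd: "g = G (Suc i) u j" and uj: "(u,j) \<in> layer3 (Suc i)" and uw: "u = w"
    by (auto simp: layer_CC)
  have u: "u < n" using uj by (auto simp: layer3_def split: if_splits)
  let ?f = "\<lambda>g. length (filter (\<lambda>v. part i v \<noteq> w) (ins CC g))"
  have "?f g \<le> 1 \<and> (?f g \<noteq> 0 \<longrightarrow> g \<in> (\<lambda>v. if Suc i = D then G D w 0 else G (Suc i) w (st ((Suc i - 2) div 2) + v)) ` {..<n})"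
    using gate_cases[OF i uj]
  proof (elim disjE conjE exE)
    assume "Suc i = D" and e: "ins3 (Suc i, u, j) = map (G i u) [0..<st T] @ (if j = 0 \<and> u \<noteq> 0 then [G i 0 0] else [])"
    then show ?thesis using uw u npos by (auto simp: gd filter_map o_def)
  next
    fix j' assume "Suc i \<noteq> D" "ins3 (Suc i, u, j) = [G i u j']"
    then show ?thesis using uw by (simp add: gd)
  next
    fix xs assume "Suc i \<noteq> D" "ins3 (Suc i, u, j) = map (G i u) xs"
    then show ?thesis using uw by (simp add: gd filter_map o_def)
  next
    assume a: "Suc i \<noteq> D" "st ((Suc i - 2) div 2) \<le> j" "j < st ((Suc i - 2) div 2) + n"
      "ins3 (Suc i, u, j) = [G i (j - st ((Suc i - 2) div 2)) (st ((Suc i - 2) div 2) + u)]"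
    have "j = st ((Suc i - 2) div 2) + (j - st ((Suc i - 2) div 2))" "j - st ((Suc i - 2) div 2) < n"
      using a(2,3) by linarith+
    then show ?thesis using a u uw by (auto simp: gd)
  qed
  then show "?f g \<le> 1" "?f g \<noteq> 0 \<Longrightarrow> g \<in> (\<lambda>v. if Suc i = D then G D w 0 else G (Suc i) w (st ((Suc i - 2) div 2) + v)) ` {..<n}"
    by auto
qed


lemma layered: "layered_circuit S n M D CC"
  unfolding layered_circuit_def
proof (intro conjI allI impI ballI)
  fix i :: nat show "finite (layer CC i)" by (rule fin_layer)
next
  fix i j :: nat assume "i \<noteq> j" then show "layer CC i \<inter> layer CC j = {}" by (auto simp: layer_CC)
next
  fix g assume "g \<in> gates CC D"
  then obtain i u j where "g = G i u j" by (auto simp: gates_def layer_CC)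
  then show "distinct (ins CC g)" using ins_distinct by simp
next
  fix g assume "g \<in> layer CC 0" then show "ins CC g = []" by (auto simp: layer_CC)
next
  show "bij_betw (inlab CC) (layer CC 0) ({..<n} \<times> {..<n})"
    by (rule bij_betw_byWitness[where f' = "\<lambda>(u,j). G 0 u j"]) (auto simp: layer_CC layer3_def)
next
  fix i g assume i: "i < D" and g: "g \<in> layer CC (Suc i)"
  then obtain u j where gd: "g = G (Suc i) u j" and uj: "(u,j) \<in> layer3 (Suc i)" by (auto simp: layer_CC)
  show "set (ins CC g) \<subseteq> layer CC i" using ins_sub[of "Suc i" u j] i uj gd by simp
  fix xs assume "length xs = length (ins CC g) \<and> set xs \<subseteq> S"
  then show "gfun CC g xs \<in> S" using gfun_S[of "Suc i" xs u j] gd by (simp del: ins3.simps gfun3.simps)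
next
  show "bij_betw (outlab CC) (layer CC D) ({..<n} \<times> {..<M})"
    by (rule bij_betw_byWitness[where f' = "\<lambda>(u,j). G D u j"]) (auto simp: layer_CC layer3_def)
next
  show "connected_circuit CC D" by (rule connected)
qed

lemma partition: "parallel_partition 1 0 n D CC part"
  unfolding parallel_partition_def
proof (intro conjI allI impI ballI)
  fix i g assume "g \<in> layer CC i"
  then show "part i g < n" by (auto simp: layer_CC layer3_def split: if_splits)
next
  fix i w assume i: "i < D"
  have p: "real n powr (1 + 0) = real n" using npos by simp
  show "real (wires_out CC part i w) \<le> 1 * real n powr (1 + 0)"
    using wires_out_le[OF i, of w] p by simp
  show "real (wires_in CC part i w) \<le> 1 * real n powr (1 + 0)"
    using wires_in_le[OF i, of w] p by simp
qed

end

theorem lemma1: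
  fixes b :: nat
  assumes "0 < b"
  shows "\<exists>c::real. \<forall>n M T (A::clique_alg) f.
           0 < n \<longrightarrow> 0 < M \<longrightarrow> computes_in (Sigma b n) n M A T f \<longrightarrow>
           (\<exists>C part. layered_circuit (Sigma b n) n M (2 * T + 1) C \<and>
                     parallel_partition c 0 n (2 * T + 1) C part \<and>
                     circuit_computes (Sigma b n) n (2 * T + 1) C f)"
proof (intro exI[of _ 1] allI impI)
  fix n M T A f
  assume n: "0 < (n::nat)" and M: "0 < (M::nat)" and c: "computes_in (Sigma b n) n M A T f"
  interpret sim n M T A "Sigma b n"
    using n M by unfold_locales (simp_all add: Sigma_def)
  show "\<exists>C part. layered_circuit (Sigma b n) n M (2 * T + 1) C \<and>
                     parallel_partition 1 0 n (2 * T + 1) C part \<and>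
                     circuit_computes (Sigma b n) n (2 * T + 1) C f"
    using layered partition computes[OF c] by blast
qed

end
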